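(* For $n\ge1$ let $$p_n(t)=\sum_{\tau\in T_n}t^{\,n-v(\tau)},$$ where $v(\tau)$ is the number of internal vertices of $\tau$. This is the Poincaré polynomial of the Stasheff polytope $\mathcal K^{n-1}$, counting its cells by dimension. Let $$f^{\mathcal K}_t(x)=\sum_{n\ge1}(-1)^n p_n(t)\,x^n.$$ Then $$f^{\mathcal K}_t(x)=\frac{-(1+(2+t)x)+\sqrt{1+2(2+t)x+t^2x^2}}{2(1+t)x}.$$ Equivalently, $f^{\mathcal K}_t$ is the compositional inverse of $$f^{\Delta}_t(x)=\sum_{n\ge1}(-1)^n\frac{(1+t)^n-1}{t}\,x^n=\frac{-x}{(1+x)(1+(1+t)x)},$$ i.e. $f^{\Delta}_t(f^{\mathcal K}_t(x))=x$.
   Context: $T_n$ ($n\ge1$) is the set of planar rooted trees with $n+1$ leaves in which every internal vertex has at least two inputs. In particular, binary trees have $n$ internal vertices and the corolla has one. *)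

theory Defs
  imports "HOL-Computational_Algebra.Formal_Power_Series"
begin

datatype ptree = Leaf | Node "ptree list"

fun wf_ptree :: "ptree \<Rightarrow> bool" where
  "wf_ptree Leaf = True"
| "wf_ptree (Node ts) = (2 \<le> length ts \<and> (\<forall>s\<in>set ts. wf_ptree s))"

fun leaves :: "ptree \<Rightarrow> nat" where
  "leaves Leaf = 1"
| "leaves (Node ts) = sum_list (map leaves ts)"

fun ivert :: "ptree \<Rightarrow> nat" where
  "ivert Leaf = 0"
| "ivert (Node ts) = Suc (sum_list (map ivert ts))"

definition T :: "nat \<Rightarrow> ptree set" where
  "T n = {\<tau>. wf_ptree \<tau> \<and> leaves \<tau> = n + 1}"

definition poincare :: "nat \<Rightarrow> real \<Rightarrow> real" where
  "poincare n t = (\<Sum>\<tau>\<in>T n. t ^ (n - ivert \<tau>))"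

definition fK :: "real \<Rightarrow> real fps" where
  "fK t = Abs_fps (\<lambda>n. if n = 0 then 0 else (-1) ^ n * poincare n t)"

text \<open>The coefficient ((1+t)^n - 1)/t, written as the polynomial sum_{k<n} (1+t)^k
  so that it also makes sense at t = 0.\<close>
definition fDelta :: "real \<Rightarrow> real fps" where
  "fDelta t = Abs_fps (\<lambda>n. if n = 0 then 0 else (-1) ^ n * (\<Sum>k<n. (1 + t) ^ k))"

end

theory Submission
  imports Defs
begin
unbundle fps_syntax

fun ex :: "ptree \<Rightarrow> nat" where
  "ex Leaf = 0"
| "ex (Node ts) = sum_list (map ex ts) + length ts - 2"

lemma sum_list_ge_length:
  "(\<forall>s\<in>set ts. 1 \<le> f s) \<Longrightarrow> length ts \<le> sum_list (map f ts)"
  by (induction ts) (auto simp: add_mono)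

lemma ex_ivert: "wf_ptree \<tau> \<Longrightarrow> ex \<tau> + ivert \<tau> + 1 = leaves \<tau>"
proof (induction \<tau>)
  case Leaf
  then show ?case by simp
next
  case (Node ts)
  have h: "\<forall>s\<in>set ts. ex s + ivert s + 1 = leaves s" using Node by auto
  have "sum_list (map leaves ts) = sum_list (map (\<lambda>s. ex s + ivert s + 1) ts)"
    using h by (metis (no_types, lifting) map_eq_conv)
  also have "\<dots> = sum_list (map ex ts) + sum_list (map ivert ts) + length ts"
    by (induction ts) auto
  finally show ?case using Node.prems by auto
qed

lemma leaves_pos: "wf_ptree \<tau> \<Longrightarrow> 1 \<le> leaves \<tau>"
  using ex_ivert[of \<tau>] by simp

definition TS :: "nat \<Rightarrow> ptree set" where
  "TS m = {\<tau>. wf_ptree \<tau> \<and> leaves \<tau> = m}"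

definition FS :: "nat \<Rightarrow> ptree list set" where
  "FS m = {ts. ts \<noteq> [] \<and> (\<forall>s\<in>set ts. wf_ptree s) \<and> sum_list (map leaves ts) = m}"

definition fe :: "ptree list \<Rightarrow> nat" where
  "fe ts = sum_list (map ex ts) + length ts - 1"

lemma FS_leaves: "ts \<in> FS m \<Longrightarrow> 1 \<le> m"
proof -
  assume "ts \<in> FS m"
  then have "length ts \<le> m" "ts \<noteq> []" unfolding FS_def using sum_list_ge_length[of ts leaves] leaves_pos
    by auto
  then show ?thesis by (cases ts) auto
qed

lemma TS0: "TS 0 = {}" using leaves_pos unfolding TS_def by force

lemma FS0: "FS 0 = {}" using FS_leaves by force

lemma TS1: "TS 1 = {Leaf}"
proof -
  have "\<tau> = Leaf" if "wf_ptree \<tau>" "leaves \<tau> = 1" for \<tau>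
  proof (cases \<tau>)
    case (Node ts)
    then have "length ts \<le> 1" using that sum_list_ge_length[of ts leaves] leaves_pos by auto
    then show ?thesis using that Node by simp
  qed simp
  then show ?thesis unfolding TS_def by auto
qed

definition SG :: "nat \<Rightarrow> (nat \<times> ptree \<times> ptree list) set" where
  "SG m = (SIGMA i:{1..<m}. TS i \<times> FS (m - i))"

lemma TS_dec:
  assumes "2 \<le> m"
  shows "TS m = (\<lambda>(i,a,r). Node (a#r)) ` SG m"
proof
  show "TS m \<subseteq> (\<lambda>(i,a,r). Node (a#r)) ` SG m"
  proof
    fix \<tau> assume "\<tau> \<in> TS m"
    then have w: "wf_ptree \<tau>" "leaves \<tau> = m" unfolding TS_def by auto
    then obtain ts where ts: "\<tau> = Node ts" using assms by (cases \<tau>) auto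
    then obtain a r where ar: "ts = a # r" "r \<noteq> []" using w
      by (cases ts; cases "tl ts") auto
    have rF: "r \<in> FS (m - leaves a)" using w ts ar unfolding FS_def by auto
    have "1 \<le> m - leaves a" using FS_leaves[OF rF] .
    moreover have "a \<in> TS (leaves a)" using w ts ar unfolding TS_def by auto
    moreover have "1 \<le> leaves a" using w ts ar leaves_pos by auto
    ultimately have "(leaves a, a, r) \<in> SG m" using rF unfolding SG_def by auto
    then show "\<tau> \<in> (\<lambda>(i,a,r). Node (a#r)) ` SG m" using ts ar by force
  qed
next
  show "(\<lambda>(i,a,r). Node (a#r)) ` SG m \<subseteq> TS m"
    unfolding SG_def TS_def FS_def by (auto simp: Suc_le_eq)
qed

lemma TS_inj: "inj_on (\<lambda>(i,a,r). Node (a#r)) (SG m)"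
  unfolding SG_def TS_def inj_on_def by auto

lemma FS_dec:
  "FS m = (\<lambda>a. [a]) ` TS m \<union> (\<lambda>(i,a,r). a#r) ` SG m"
proof
  show "FS m \<subseteq> (\<lambda>a. [a]) ` TS m \<union> (\<lambda>(i,a,r). a#r) ` SG m"
  proof
    fix ts assume tsF: "ts \<in> FS m"
    then obtain a r where ar: "ts = a # r" unfolding FS_def by (cases ts) auto
    show "ts \<in> (\<lambda>a. [a]) ` TS m \<union> (\<lambda>(i,a,r). a#r) ` SG m"
    proof (cases "r = []")
      case True
      then show ?thesis using tsF ar unfolding FS_def TS_def by auto
    next
      case False
      have rF: "r \<in> FS (m - leaves a)" using tsF False ar unfolding FS_def by auto
      have "1 \<le> m - leaves a" using FS_leaves[OF rF] .
      moreover have "a \<in> TS (leaves a)" using tsF ar unfolding TS_def FS_def by auto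
      moreover have "1 \<le> leaves a" using tsF ar leaves_pos unfolding FS_def by auto
      ultimately have "(leaves a, a, r) \<in> SG m" using rF unfolding SG_def by auto
      then show ?thesis using ar by force
    qed
  qed
next
  show "(\<lambda>a. [a]) ` TS m \<union> (\<lambda>(i,a,r). a#r) ` SG m \<subseteq> FS m"
    unfolding SG_def TS_def FS_def by (auto simp: Suc_le_eq)
qed

lemma FS_inj: "inj_on (\<lambda>(i,a,r). a#r) (SG m)"
  unfolding SG_def TS_def inj_on_def by auto

lemma fin: "finite (TS m) \<and> finite (FS m)"
proof (induction m rule: less_induct)
  case (less m)
  have fSG: "finite (SG m)" unfolding SG_def
    using less by (intro finite_SigmaI finite_cartesian_product) auto
  have fT: "finite (TS m)"
  proof (cases "2 \<le> m")
    case True then show ?thesis using TS_dec fSG by simp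
  next
    case False then have "m = 0 \<or> m = 1" by auto
    then show ?thesis using TS0 TS1 by auto
  qed
  moreover have "finite (FS m)" using FS_dec fT fSG by simp
  ultimately show ?case by simp
qed


definition aa :: "real \<Rightarrow> nat \<Rightarrow> real" where
  "aa t m = (\<Sum>\<tau>\<in>TS m. t ^ ex \<tau>)"

definition ff :: "real \<Rightarrow> nat \<Rightarrow> real" where
  "ff t m = (\<Sum>r\<in>FS m. t ^ fe r)"

lemma SG_sum:
  "(\<Sum>(i,a,r)\<in>SG m. t ^ ex a * t ^ fe r) = (\<Sum>i\<in>{1..<m}. aa t i * ff t (m - i))"
proof -
  have "(\<Sum>(i,a,r)\<in>SG m. t ^ ex a * t ^ fe r) = (\<Sum>i\<in>{1..<m}. \<Sum>(a,r)\<in>TS i \<times> FS (m - i). t ^ ex a * t ^ fe r)"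
    unfolding SG_def using fin by (subst sum.Sigma) (auto simp: case_prod_unfold)
  also have "\<dots> = (\<Sum>i\<in>{1..<m}. aa t i * ff t (m - i))"
    unfolding aa_def ff_def
    by (intro sum.cong refl) (simp add: sum_product sum.cartesian_product)
  finally show ?thesis .
qed

lemma aa_rec:
  assumes "2 \<le> m"
  shows "aa t m = (\<Sum>i\<in>{1..<m}. aa t i * ff t (m - i))"
proof -
  have "aa t m = (\<Sum>(i,a,r)\<in>SG m. t ^ ex (Node (a#r)))"
    unfolding aa_def TS_dec[OF assms] using TS_inj
    by (subst sum.reindex) (auto simp: case_prod_unfold)
  also have "\<dots> = (\<Sum>(i,a,r)\<in>SG m. t ^ ex a * t ^ fe r)"
  proof (intro sum.cong refl)
    fix x assume "x \<in> SG m"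
    then obtain i a r where x: "x = (i,a,r)" "r \<noteq> []" unfolding SG_def FS_def by auto
    have "ex (Node (a#r)) = ex a + fe r" using x(2) unfolding fe_def
      by (cases r) auto
    then show "(case x of (i,a,r) \<Rightarrow> t ^ ex (Node (a#r))) = (case x of (i,a,r) \<Rightarrow> t ^ ex a * t ^ fe r)"
      using x by (simp add: power_add)
  qed
  finally show ?thesis using SG_sum by simp
qed

lemma ff_rec:
  "ff t m = aa t m + t * (\<Sum>i\<in>{1..<m}. aa t i * ff t (m - i))"
proof -
  have disj: "(\<lambda>a. [a]) ` TS m \<inter> (\<lambda>(i,a,r). a#r) ` SG m = {}"
    unfolding SG_def FS_def by auto
  have "ff t m = (\<Sum>r\<in>(\<lambda>a. [a]) ` TS m. t ^ fe r) + (\<Sum>r\<in>(\<lambda>(i,a,r). a#r) ` SG m. t ^ fe r)"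
    unfolding ff_def FS_dec
    by (rule sum.union_disjoint) (use fin disj in \<open>auto simp: SG_def intro!: finite_SigmaI\<close>)
  also have "(\<Sum>r\<in>(\<lambda>a. [a]) ` TS m. t ^ fe r) = aa t m"
    unfolding aa_def by (subst sum.reindex) (auto simp: inj_on_def fe_def)
  also have "(\<Sum>r\<in>(\<lambda>(i,a,r). a#r) ` SG m. t ^ fe r) = (\<Sum>(i,a,r)\<in>SG m. t ^ fe (a#r))"
    using FS_inj by (subst sum.reindex) (auto simp: case_prod_unfold)
  also have "\<dots> = (\<Sum>(i,a,r)\<in>SG m. t * (t ^ ex a * t ^ fe r))"
  proof (intro sum.cong refl)
    fix x assume "x \<in> SG m"
    then obtain i a r where x: "x = (i,a,r)" "r \<noteq> []" unfolding SG_def FS_def by auto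
    have "fe (a#r) = Suc (ex a + fe r)" using x(2) unfolding fe_def
      by (cases r) auto
    then show "(case x of (i,a,r) \<Rightarrow> t ^ fe (a#r)) = (case x of (i,a,r) \<Rightarrow> t * (t ^ ex a * t ^ fe r))"
      using x by (simp add: power_add)
  qed
  also have "\<dots> = t * (\<Sum>(i,a,r)\<in>SG m. t ^ ex a * t ^ fe r)"
    by (simp add: sum_distrib_left case_prod_unfold)
  finally show ?thesis using SG_sum by simp
qed

lemma aa0: "aa t 0 = 0" unfolding aa_def TS0 by simp
lemma aa1: "aa t (Suc 0) = 1" using TS1 by (simp add: aa_def)
lemma ff0: "ff t 0 = 0" unfolding ff_def FS0 by simp

lemma conv: "(\<Sum>i\<in>{1..<m}. aa t i * ff t (m - i)) = (Abs_fps (aa t) * Abs_fps (ff t))$m"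
proof (cases m)
  case 0 then show ?thesis by (simp add: fps_mult_nth aa0)
next
  case (Suc k)
  have "(Abs_fps (aa t) * Abs_fps (ff t))$m = (\<Sum>i=0..m. aa t i * ff t (m - i))"
    by (simp add: fps_mult_nth)
  also have "\<dots> = (\<Sum>i=1..m. aa t i * ff t (m - i))"
    using Suc by (simp add: sum.atLeast_Suc_atMost aa0)
  also have "\<dots> = (\<Sum>i=1..<Suc m. aa t i * ff t (m - i))"
    by (simp only: atLeastLessThanSuc_atLeastAtMost)
  also have "\<dots> = (\<Sum>i=1..<m. aa t i * ff t (m - i))"
    using Suc by (simp add: ff0)
  finally show ?thesis by simp
qed

lemma eqA: "Abs_fps (aa t) = fps_X + Abs_fps (aa t) * Abs_fps (ff t)"
proof (rule fps_ext)
  fix m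
  show "Abs_fps (aa t)$m = (fps_X + Abs_fps (aa t) * Abs_fps (ff t))$m"
  proof (cases "2 \<le> m")
    case True then show ?thesis using aa_rec[OF True] conv[of t m] by (simp add: fps_X_def)
  next
    case False then have "m = 0 \<or> m = 1" by auto
    then show ?thesis using conv[of t m] by (auto simp: aa0 aa1 fps_X_def)
  qed
qed

lemma eqF: "Abs_fps (ff t) = Abs_fps (aa t) + fps_const t * (Abs_fps (aa t) * Abs_fps (ff t))"
  proof (rule fps_ext)
  fix m
  have "ff t m = aa t m + t * (\<Sum>i\<in>{1..<m}. aa t i * ff t (m - i))" by (rule ff_rec)
  then show "Abs_fps (ff t) $ m = (Abs_fps (aa t) + fps_const t * (Abs_fps (aa t) * Abs_fps (ff t))) $ m"
    using conv[of t m] by simp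
qed

lemma poincare_aa: "poincare n t = aa t (n + 1)"
proof -
  have "poincare n t = (\<Sum>\<tau>\<in>TS (n+1). t ^ (n - ivert \<tau>))"
    unfolding poincare_def T_def TS_def by simp
  also have "\<dots> = aa t (n+1)" unfolding aa_def
  proof (intro sum.cong refl)
    fix \<tau> assume "\<tau> \<in> TS (n+1)"
    then have "ex \<tau> + ivert \<tau> + 1 = n + 1" using ex_ivert unfolding TS_def by auto
    then have "n - ivert \<tau> = ex \<tau>" by arith
    then show "t ^ (n - ivert \<tau>) = t ^ ex \<tau>" by simp
  qed
  finally show ?thesis .
qed


lemma B_eq: "Abs_fps (\<lambda>n. (-1)^n * aa t n) = - fps_X + Abs_fps (\<lambda>n. (-1)^n * aa t n) *
   (Abs_fps (\<lambda>n. (-1)^n * aa t n) + fps_const t * (Abs_fps (\<lambda>n. (-1)^n * aa t n) + fps_X))"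
proof -
  define A where "A = Abs_fps (aa t)"
  define F where "F = Abs_fps (ff t)"
  have e1: "A = fps_X + A * F" unfolding A_def F_def by (rule eqA)
  have e2: "F = A + fps_const t * (A * F)" unfolding A_def F_def by (rule eqF)
  have e3: "A = fps_X + A * (A + fps_const t * (A - fps_X))"
    using e1 e2 by algebra
  have m0: "(- fps_X :: real fps) $ 0 = 0" by simp
  have "A oo (- fps_X) = (fps_X + A * (A + fps_const t * (A - fps_X))) oo (- fps_X)"
    using e3 by simp
  also have "\<dots> = - fps_X + (A oo - fps_X) * ((A oo - fps_X) + fps_const t * ((A oo - fps_X) + fps_X))"
    by (simp add: fps_compose_add_distrib fps_compose_mult_distrib[OF m0]
          fps_compose_sub_distrib fps_compose_uminus)
  finally have "A oo (- fps_X) = - fps_X + (A oo - fps_X) * ((A oo - fps_X) + fps_const t * ((A oo - fps_X) + fps_X))" .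
  moreover have "A oo (- fps_X) = Abs_fps (\<lambda>n. (-1)^n * aa t n)"
    unfolding A_def fps_compose_uminus' by simp
  ultimately show ?thesis by simp
qed

lemma B_K: "Abs_fps (\<lambda>n. (-1)^n * aa t n) = - fps_X * (1 + fK t)"
proof (rule fps_ext)
  fix n
  show "Abs_fps (\<lambda>n. (-1)^n * aa t n) $ n = (- fps_X * (1 + fK t)) $ n"
  proof (cases n)
    case 0 then show ?thesis by (simp add: aa0)
  next
    case (Suc k)
    then show ?thesis
      by (cases "k = 0") (auto simp: aa1 fK_def poincare_aa)
  qed
qed

lemma keyE: "fK t + fps_X * (1 + fK t) * (1 + (1 + fps_const t) * fK t) = 0"
proof -
  define K where "K = fK t"
  define B where "B = Abs_fps (\<lambda>n. (-1)^n * aa t n)"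
  have h1: "B = - fps_X + B * (B + fps_const t * (B + fps_X))" unfolding B_def by (rule B_eq)
  have h2: "B = - fps_X * (1 + K)" unfolding B_def K_def by (rule B_K)
  have "fps_X * (K + fps_X * (1 + K) * (1 + (1 + fps_const t) * K)) = 0"
    using h1 h2 by algebra
  then show ?thesis unfolding K_def by simp
qed

lemma c1: "fps_const (1 + t) = 1 + fps_const (t::real)"
  by (simp add: fps_const_add[symmetric])
lemma c2: "fps_const (2 + t) = 2 + fps_const (t::real)"
  by (simp only: fps_const_add[symmetric] numeral_fps_const)

lemma K0: "fK t $ 0 = 0" by (simp add: fK_def)

lemma DQ: "fDelta t * ((1 + fps_X) * (1 + fps_const (1 + t) * fps_X)) = - fps_X"
proof -
  define g where "g n = (\<Sum>k<n. (1 + t) ^ k)" for n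
  have Dn: "fDelta t $ n = (-1)^n * g n" for n
    by (simp add: fDelta_def g_def)
  have "fDelta t * ((1 + fps_X) * (1 + fps_const (1 + t) * fps_X)) =
        fDelta t + fps_const (2 + t) * (fps_X * fDelta t) + fps_const (1 + t) * (fps_X^2 * fDelta t)"
    unfolding c1 c2 by algebra
  also have "\<dots> = - fps_X"
  proof (rule fps_ext)
    fix n
    show "(fDelta t + fps_const (2 + t) * (fps_X * fDelta t) + fps_const (1 + t) * (fps_X^2 * fDelta t)) $ n = (- fps_X :: real fps) $ n"
    proof (cases n)
      case 0 then show ?thesis by (simp add: Dn g_def)
    next
      case (Suc m)
      show ?thesis
      proof (cases m)
        case 0 then show ?thesis using Suc by (simp add: Dn g_def fps_X_power_mult_nth)
      next
        case (Suc k)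
        have "g (Suc (Suc k)) = g k + (1+t)^k + (1+t)^Suc k" "g (Suc k) = g k + (1+t)^k"
          by (simp_all add: g_def)
        then show ?thesis using Suc \<open>n = Suc m\<close>
          apply (simp only: fps_add_nth fps_mult_left_const_nth fps_X_mult_nth fps_X_power_mult_nth)
          apply (simp add: Dn)
          apply (simp add: algebra_simps)
          done
      qed
    qed
  qed
  finally show ?thesis .
qed

lemma Q0: "((1 + fps_X) * (1 + fps_const (1 + t) * fps_X) :: real fps) \<noteq> 0"
proof
  assume h: "((1 + fps_X) * (1 + fps_const (1 + t) * fps_X) :: real fps) = 0"
  have "((1 + fps_X) * (1 + fps_const (1 + t) * fps_X) :: real fps) $ 0 = 1" by simp
  then show False using h by simp
qed

lemma part2: "fDelta t = - fps_X / ((1 + fps_X) * (1 + fps_const (1 + t) * fps_X))"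
  using DQ[of t] Q0[of t] by (metis nonzero_mult_div_cancel_right)

lemma part3: "fps_compose (fDelta t) (fK t) = fps_X"
proof -
  define K where "K = fK t"
  have k0: "K $ 0 = 0" unfolding K_def by (rule K0)
  have "(fDelta t * ((1 + fps_X) * (1 + fps_const (1 + t) * fps_X))) oo K = (- fps_X) oo K"
    using DQ by simp
  then have "(fDelta t oo K) * ((1 + K) * (1 + fps_const (1 + t) * K)) = - K"
    using k0 by (simp add: fps_compose_mult_distrib fps_compose_add_distrib fps_compose_uminus)
  moreover have "- K = fps_X * ((1 + K) * (1 + fps_const (1 + t) * K))"
    using keyE[of t] unfolding K_def[symmetric] c1 by algebra
  moreover have "((1 + K) * (1 + fps_const (1 + t) * K)) \<noteq> 0"
  proof
    assume h: "((1 + K) * (1 + fps_const (1 + t) * K)) = 0"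
    have "((1 + K) * (1 + fps_const (1 + t) * K)) $ 0 = 1" using k0 by simp
    then show False using h by simp
  qed
  ultimately show ?thesis unfolding K_def by simp
qed

lemma part1:
  assumes t: "t \<noteq> -1"
  shows "fK t = (- (1 + fps_const (2 + t) * fps_X)
                   + fps_radical (\<lambda>k a. root k a) 2 (1 + fps_const (2 * (2 + t)) * fps_X + fps_const (t ^ 2) * fps_X ^ 2))
                  / (fps_const (2 * (1 + t)) * fps_X)"
proof -
  define K where "K = fK t"
  define ct where "ct = fps_const t"
  define b where "b = (1 + fps_const (2 * (2 + t)) * fps_X + fps_const (t ^ 2) * fps_X ^ 2 :: real fps)"
  define S where "S = 1 + fps_const (2 + t) * fps_X + fps_const (2 * (1 + t)) * fps_X * K"
  have c3: "fps_const (2 * (2 + t)) = 2 * (2 + ct)"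
    unfolding ct_def by (simp only: fps_const_mult[symmetric] fps_const_add[symmetric] numeral_fps_const)
  have c4: "fps_const (2 * (1 + t)) = 2 * (1 + ct)"
    unfolding ct_def by (simp only: fps_const_mult[symmetric] fps_const_add[symmetric] numeral_fps_const fps_const_1_eq_1)
  have c5: "fps_const (t ^ 2) = ct ^ 2"
    unfolding ct_def by (simp only: fps_const_power)
  have c2': "fps_const (2 + t) = 2 + ct" unfolding ct_def by (rule c2)
  have E: "K + fps_X * (1 + K) * (1 + (1 + ct) * K) = 0"
    unfolding K_def ct_def by (rule keyE)
  have S2: "S ^ 2 = b"
    unfolding S_def b_def c2' c3 c4 c5 using E by algebra
  have b0: "b $ 0 = 1" unfolding b_def by simp
  have S0: "S $ 0 = 1" unfolding S_def by simp
  have "S ^ Suc 1 = b \<longleftrightarrow> S = fps_radical (\<lambda>k a. root k a) (Suc 1) b"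
    by (rule radical_unique) (simp_all add: b0 S0)
  with S2 have R: "S = fps_radical (\<lambda>k a. root k a) 2 b"
    by (simp add: numeral_2_eq_2)
  have nz: "fps_const (2 * (1 + t)) * fps_X \<noteq> (0 :: real fps)"
    using t by simp
  have "- (1 + fps_const (2 + t) * fps_X) + S = K * (fps_const (2 * (1 + t)) * fps_X)"
    unfolding S_def by (simp add: algebra_simps)
  then have "(- (1 + fps_const (2 + t) * fps_X) + S) / (fps_const (2 * (1 + t)) * fps_X) = K"
    using nz by simp
  then show ?thesis unfolding R b_def K_def by simp
qed

theorem corollary4p4:
  fixes t :: real
  shows "(t \<noteq> -1 \<longrightarrow>
           fK t = (- (1 + fps_const (2 + t) * fps_X)
                   + fps_radical (\<lambda>k a. root k a) 2 (1 + fps_const (2 * (2 + t)) * fps_X + fps_const (t ^ 2) * fps_X ^ 2))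
                  / (fps_const (2 * (1 + t)) * fps_X))
       \<and> fDelta t = - fps_X / ((1 + fps_X) * (1 + fps_const (1 + t) * fps_X))
       \<and> fps_compose (fDelta t) (fK t) = fps_X"
  using part1 part2 part3 by blast

end
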